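(* Let $\mathbf{a}\in\mathbb{C}^n$, $\beta>0$ and $f(\mathbf{z})=\frac12|\mathbf{a}^*\mathbf{z}|^2+\frac{\beta}{2}\|\mathbf{z}\|_4^4$. If $\mathbf{z}$ is a local minimizer of $f$ on $\mathbb{CS}^{n-1}$ with $\mathbf{a}^*\mathbf{z}=0$, then $\mathbf{z}$ has at most one zero component, and all nonzero components of $\mathbf{z}$ have the same modulus.
   Context: $\mathbb{CS}^{n-1}=\{\mathbf{z}\in\mathbb{C}^n:\|\mathbf{z}\|_2=1\}$; $\|\mathbf{z}\|_4^4=\sum_k|z_k|^4$. *)

theory Defs
  imports "HOL-Analysis.Analysis"
begin

definition csphere :: "(complex ^ 'n) set" where
  "csphere = {z. (\<Sum>k\<in>UNIV. (cmod (z $ k))\<^sup>2) = 1}"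

definition cinner_star :: "complex ^ 'n \<Rightarrow> complex ^ 'n \<Rightarrow> complex" where
  "cinner_star a z = (\<Sum>k\<in>UNIV. cnj (a $ k) * z $ k)"

definition f_obj :: "complex ^ 'n \<Rightarrow> real \<Rightarrow> complex ^ 'n \<Rightarrow> real" where
  "f_obj a \<beta> z = (1/2) * (cmod (cinner_star a z))\<^sup>2 + (\<beta>/2) * (\<Sum>k\<in>UNIV. (cmod (z $ k)) ^ 4)"

definition local_min_on :: "('a::metric_space \<Rightarrow> real) \<Rightarrow> 'a set \<Rightarrow> 'a \<Rightarrow> bool" where
  "local_min_on g S z \<longleftrightarrow> z \<in> S \<and> (\<exists>\<epsilon>>0. \<forall>w\<in>S. dist w z < \<epsilon> \<longrightarrow> g z \<le> g w)"

end

theory Submission imports Defs begin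

lemma norm_le_l1_gen: "norm (x::'a::real_normed_vector^'n) \<le> (\<Sum>i\<in>UNIV. norm (x$i))"
  unfolding norm_vec_def by (rule L2_set_le_sum) simp

lemma sum_two:
  fixes g :: "'n::finite \<Rightarrow> 'a::comm_monoid_add"
  assumes "j \<noteq> k"
  shows "sum g UNIV = g j + g k + sum g (UNIV - {j,k})"
proof -
  have "sum g UNIV = g j + sum g (UNIV - {j})" by (simp add: sum.remove)
  also have "sum g (UNIV - {j}) = g k + sum g (UNIV - {j} - {k})"
    using assms by (intro sum.remove) auto
  finally show ?thesis by (simp add: add.assoc Diff_insert2[symmetric])
qed

lemma sphere_norm: "z \<in> csphere \<Longrightarrow> norm z = 1"
  unfolding csphere_def norm_vec_def L2_set_def by simp

lemma cinner_add: "cinner_star a (x + y) = cinner_star a x + cinner_star a y"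
  unfolding cinner_star_def by (simp add: distrib_left sum.distrib)

lemma cinner_scaleR: "cinner_star a (r *\<^sub>R x) = of_real r * cinner_star a x"
  unfolding cinner_star_def
  by (simp add: sum_distrib_left, simp add: scaleR_conv_of_real mult.left_commute)

lemma exists_u:
  fixes x y :: complex
  shows "\<exists>u1 u2. cnj x * u1 + cnj y * u2 = 0 \<and> (cmod u1)\<^sup>2 + (cmod u2)\<^sup>2 = 1"
proof (cases "x = 0 \<and> y = 0")
  case True
  then show ?thesis by (intro exI[of _ 1] exI[of _ 0]) simp
next
  case False
  define N where "N = sqrt ((cmod x)\<^sup>2 + (cmod y)\<^sup>2)"
  have pos: "(cmod x)\<^sup>2 + (cmod y)\<^sup>2 > 0" using False
    by (metis add_nonneg_pos add_pos_nonneg norm_eq_zero not_less_iff_gr_or_eq zero_le_power2 zero_less_power2)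
  hence Npos: "N > 0" unfolding N_def by simp
  have N2: "N\<^sup>2 = (cmod x)\<^sup>2 + (cmod y)\<^sup>2" unfolding N_def using pos by simp
  show ?thesis
  proof (rule exI[of _ "cnj y / of_real N"], rule exI[of _ "- cnj x / of_real N"], intro conjI)
    show "cnj x * (cnj y / complex_of_real N) + cnj y * (- cnj x / complex_of_real N) = 0"
      by (simp add: divide_simps mult.commute)
    show "(cmod (cnj y / complex_of_real N))\<^sup>2 + (cmod (- cnj x / complex_of_real N))\<^sup>2 = 1"
    proof -
      have "cmod (cnj y / complex_of_real N) = cmod y / N" "cmod (- cnj x / complex_of_real N) = cmod x / N"
        using Npos by (simp_all add: norm_divide)
      then show ?thesis using Npos N2 False by (simp add: power_divide add_divide_distrib[symmetric])
    qed
  qed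
qed

lemma Zpos:
  assumes "z \<in> csphere"
  shows "(\<Sum>i\<in>UNIV. (cmod (z $ i))^4) > 0"
proof -
  have "z \<noteq> 0" using sphere_norm[OF assms] by auto
  then obtain i where i: "z $ i \<noteq> 0" by (metis vec_eq_iff zero_index)
  have "(cmod (z $ i))^4 \<le> (\<Sum>i\<in>UNIV. (cmod (z $ i))^4)"
    by (rule member_le_sum) auto
  moreover have "(cmod (z $ i))^4 > 0" using i by simp
  ultimately show ?thesis by linarith
qed

lemma zero_case:
  fixes a z :: "complex ^ 'n" and \<beta> :: real
  assumes b: "\<beta> > 0" and zs: "z \<in> csphere" and az: "cinner_star a z = 0"
    and jk: "j \<noteq> k" and zj: "z $ j = 0" and zk: "z $ k = 0" and e: "\<epsilon> > 0"
  shows "\<exists>w\<in>csphere. dist w z < \<epsilon> \<and> f_obj a \<beta> w < f_obj a \<beta> z"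
proof -
  obtain u1 u2 where hu: "cnj (a$j) * u1 + cnj (a$k) * u2 = 0" and hu2: "(cmod u1)\<^sup>2 + (cmod u2)\<^sup>2 = 1"
    using exists_u by blast
  define Z where "Z = (\<Sum>i\<in>UNIV. (cmod (z $ i))^4)"
  have Z: "Z > 0" unfolding Z_def using Zpos[OF zs] .
  define s where "s = min (1/2) (min (Z/2) (\<epsilon>/4))"
  have s0: "s > 0" and s1: "s \<le> 1/2" and s2: "s \<le> Z/2" and s3: "s \<le> \<epsilon>/4"
    using Z e unfolding s_def by auto
  have ss: "s^2 \<le> s" using s0 s1 by (simp add: power2_eq_square mult_le_cancel_right1 mult_left_le)
  have key: "s^2 * (1 + Z) < 2 * Z"
  proof -
    have "s^2 < 1" using ss s1 by linarith
    hence "s^2 * Z < 1 * Z" using Z by (intro mult_strict_right_mono) auto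
    hence "s^2 * Z < Z" by simp
    moreover have "s^2 < Z" using ss s2 Z by linarith
    ultimately show ?thesis by (simp add: algebra_simps)
  qed
  define c where "c = sqrt (1 - s^2)"
  have c2: "c^2 = 1 - s^2" unfolding c_def using ss s1 by simp
  have c0: "c \<ge> 0" and c1: "c \<le> 1" unfolding c_def using ss s0 s1 by auto
  have cge: "1 - c \<le> s"
  proof -
    have "c^2 \<le> c" using c0 c1 by (simp add: power2_eq_square mult_left_le)
    thus ?thesis using c2 ss by linarith
  qed
  define u :: "complex ^ 'n" where "u = (\<chi> i. if i = j then u1 else if i = k then u2 else 0)"
  define w where "w = c *\<^sub>R z + s *\<^sub>R u"
  have uj: "u $ j = u1" and uk: "u $ k = u2" and ur: "\<And>i. i \<in> UNIV - {j,k} \<Longrightarrow> u $ i = 0"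
    unfolding u_def using jk by auto
  have wi: "\<And>i. w $ i = of_real c * z $ i + of_real s * u $ i"
    unfolding w_def by (simp, simp add: scaleR_conv_of_real)
  have wj: "w $ j = of_real s * u1" and wk: "w $ k = of_real s * u2"
    using wi uj uk zj zk by auto
  have wr: "\<And>i. i \<in> UNIV - {j,k} \<Longrightarrow> w $ i = of_real c * z $ i"
    using wi ur by auto
  have zsum: "(\<Sum>i\<in>UNIV - {j,k}. (cmod (z $ i))\<^sup>2) = 1"
    using zs sum_two[OF jk, of "\<lambda>i. (cmod (z $ i))\<^sup>2"] zj zk unfolding csphere_def by simp
  have "(\<Sum>i\<in>UNIV. (cmod (w $ i))\<^sup>2) = (cmod (w$j))\<^sup>2 + (cmod (w$k))\<^sup>2 + (\<Sum>i\<in>UNIV - {j,k}. (cmod (w $ i))\<^sup>2)"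
    by (rule sum_two[OF jk])
  also have "(\<Sum>i\<in>UNIV - {j,k}. (cmod (w $ i))\<^sup>2) = (\<Sum>i\<in>UNIV - {j,k}. c^2 * (cmod (z $ i))\<^sup>2)"
    by (rule sum.cong) (auto simp: wr norm_mult power_mult_distrib c0)
  also have "\<dots> = c^2" by (simp add: sum_distrib_left[symmetric] zsum)
  finally have "(\<Sum>i\<in>UNIV. (cmod (w $ i))\<^sup>2) = s^2 * ((cmod u1)\<^sup>2 + (cmod u2)\<^sup>2) + c^2"
    by (simp add: wj wk norm_mult power_mult_distrib algebra_simps)
  hence wsph: "w \<in> csphere" unfolding csphere_def using hu2 c2 by simp
  have "cinner_star a u = cnj (a$j) * u $ j + cnj (a$k) * u $ k + (\<Sum>i\<in>UNIV - {j,k}. cnj (a$i) * u$i)"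
    unfolding cinner_star_def by (rule sum_two[OF jk])
  hence au: "cinner_star a u = 0" using hu uj uk ur by simp
  have aw: "cinner_star a w = 0" unfolding w_def by (simp add: cinner_add cinner_scaleR az au)
  have zsum4: "(\<Sum>i\<in>UNIV - {j,k}. (cmod (z $ i))^4) = Z"
    using sum_two[OF jk, of "\<lambda>i. (cmod (z $ i))^4"] zj zk unfolding Z_def by simp
  have "(\<Sum>i\<in>UNIV. (cmod (w $ i))^4) = (cmod (w$j))^4 + (cmod (w$k))^4 + (\<Sum>i\<in>UNIV - {j,k}. (cmod (w $ i))^4)"
    by (rule sum_two[OF jk])
  also have "(\<Sum>i\<in>UNIV - {j,k}. (cmod (w $ i))^4) = (\<Sum>i\<in>UNIV - {j,k}. c^4 * (cmod (z $ i))^4)"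
    by (rule sum.cong) (auto simp: wr norm_mult power_mult_distrib c0)
  also have "\<dots> = c^4 * Z" by (simp add: sum_distrib_left[symmetric] zsum4)
  finally have W4: "(\<Sum>i\<in>UNIV. (cmod (w $ i))^4) = s^4 * ((cmod u1)^4 + (cmod u2)^4) + c^4 * Z"
    by (simp add: wj wk norm_mult power_mult_distrib algebra_simps)
  have u4: "(cmod u1)^4 + (cmod u2)^4 \<le> 1"
  proof -
    have "(cmod u1)^4 + (cmod u2)^4 \<le> ((cmod u1)\<^sup>2 + (cmod u2)\<^sup>2)^2"
      by (simp add: power2_sum)
    thus ?thesis using hu2 by simp
  qed
  have c4: "c^4 = (1 - s^2)^2" using c2 by (metis power_mult num_double numeral_times_numeral mult_2 mult.commute power2_eq_square)
  have "(\<Sum>i\<in>UNIV. (cmod (w $ i))^4) < Z"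
  proof -
    have "s^4 * ((cmod u1)^4 + (cmod u2)^4) \<le> s^4" using u4 s0 by (simp add: mult_left_le)
    moreover have "s^4 + (1 - s^2)^2 * Z < Z"
    proof -
      have "s^2 * (s^2 * (1 + Z)) < s^2 * (2 * Z)" using key s0 by (intro mult_strict_left_mono) auto
      thus ?thesis by (simp add: power2_eq_square algebra_simps power4_eq_xxxx)
    qed
    ultimately show ?thesis unfolding W4 c4 by linarith
  qed
  hence "(\<beta>/2) * (\<Sum>i\<in>UNIV. (cmod (w $ i))^4) < (\<beta>/2) * Z" using b by simp
  hence fw: "f_obj a \<beta> w < f_obj a \<beta> z" unfolding f_obj_def aw az Z_def by simp
  have nu: "norm u \<le> 2"
  proof -
    have "norm u \<le> (\<Sum>i\<in>UNIV. norm (u$i))" by (rule norm_le_l1_gen)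
    also have "\<dots> = norm (u$j) + norm (u$k) + (\<Sum>i\<in>UNIV - {j,k}. norm (u$i))" by (rule sum_two[OF jk])
    also have "\<dots> = cmod u1 + cmod u2" using uj uk ur by simp
    also have "\<dots> \<le> 2"
    proof -
      have "(cmod u1)^2 \<le> 1" "(cmod u2)^2 \<le> 1" using hu2 zero_le_power2[of "cmod u1"] zero_le_power2[of "cmod u2"] by linarith+
      hence "cmod u1 \<le> 1" "cmod u2 \<le> 1" by (simp_all add: abs_square_le_1)
      thus ?thesis by linarith
    qed
    finally show ?thesis .
  qed
  have "dist w z = norm ((c - 1) *\<^sub>R z + s *\<^sub>R u)"
    unfolding dist_norm w_def by (simp add: algebra_simps)
  also have "\<dots> \<le> norm ((c - 1) *\<^sub>R z) + norm (s *\<^sub>R u)" by (rule norm_triangle_ineq)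
  also have "\<dots> = \<bar>c - 1\<bar> + s * norm u" using sphere_norm[OF zs] s0 by simp
  also have "\<dots> \<le> s + s * 2"
  proof -
    have "\<bar>c - 1\<bar> \<le> s" using cge c1 by linarith
    moreover have "s * norm u \<le> s * 2" using nu s0 by (intro mult_left_mono) auto
    ultimately show ?thesis by linarith
  qed
  also have "\<dots> < \<epsilon>" using s3 s0 by linarith
  finally show ?thesis using wsph fw by blast
qed

lemma pow4: "(x::real)^4 = (x\<^sup>2)\<^sup>2"
  by (simp add: power4_eq_xxxx power2_eq_square)

lemma mod_case:
  fixes a z :: "complex ^ 'n" and \<beta> :: real
  assumes b: "\<beta> > 0" and zs: "z \<in> csphere" and az: "cinner_star a z = 0"
    and hjk: "cmod (z $ k) < cmod (z $ j)" and hk: "z $ k \<noteq> 0" and e: "\<epsilon> > 0"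
  shows "\<exists>w\<in>csphere. dist w z < \<epsilon> \<and> f_obj a \<beta> w < f_obj a \<beta> z"
proof -
  have jk: "j \<noteq> k" using hjk by auto
  define p where "p = (cmod (z $ j))\<^sup>2"
  define q where "q = (cmod (z $ k))\<^sup>2"
  have q0: "q > 0" unfolding q_def using hk by simp
  have pq: "q < p" unfolding p_def q_def using hjk hk by (simp add: power_strict_mono)
  define A where "A = cmod (a$j) * cmod (z$j) / p + cmod (a$k) * cmod (z$k) / q"
  define D where "D = cmod (z$j) / p + cmod (z$k) / q"
  have A0: "A \<ge> 0" and D0: "D \<ge> 0" unfolding A_def D_def using q0 pq by auto
  define K where "K = A^2/2 + \<beta>"
  have K0: "K > 0" unfolding K_def using b by (simp add: add_nonneg_pos)
  define t where "t = min (q/2) (min (\<beta>*(p-q)/(2*K)) (\<epsilon>/(2*(D+1))))"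
  have t0: "t > 0" unfolding t_def using q0 pq b K0 e D0 by auto
  have tq: "t \<le> q" unfolding t_def using q0 by auto
  have tK: "t * K < \<beta>*(p-q)"
  proof -
    have "t \<le> \<beta>*(p-q)/(2*K)" unfolding t_def by auto
    hence "t * K \<le> \<beta>*(p-q)/2" using K0 by (simp add: field_simps)
    moreover have "\<beta>*(p-q) > 0" using b pq by simp
    ultimately show ?thesis by linarith
  qed
  have tD: "t * D < \<epsilon>"
  proof -
    have "t \<le> \<epsilon>/(2*(D+1))" unfolding t_def by auto
    hence "t * (2*(D+1)) \<le> \<epsilon>" using D0 by (simp add: field_simps)
    moreover have "t * D < t * (2*(D+1))" using t0 D0 by (intro mult_strict_left_mono) auto
    ultimately show ?thesis by linarith
  qed
  define cj where "cj = sqrt (1 - t/p)"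
  define ck where "ck = sqrt (1 + t/q)"
  have tp: "t/p \<le> 1" using tq pq q0 by simp
  have cj2: "cj^2 = 1 - t/p" unfolding cj_def using tp by simp
  have ck2: "ck^2 = 1 + t/q" unfolding ck_def using t0 q0 by simp
  have cj0: "cj \<ge> 0" and cj1: "cj \<le> 1" unfolding cj_def using t0 pq q0 tp by auto
  have ck1: "ck \<ge> 1" unfolding ck_def using t0 q0 by simp
  have cjb: "\<bar>cj - 1\<bar> \<le> t/p"
  proof -
    have "cj^2 \<le> cj" using cj0 cj1 by (simp add: power2_eq_square mult_left_le)
    thus ?thesis using cj2 cj1 by linarith
  qed
  have ckb: "\<bar>ck - 1\<bar> \<le> t/q"
  proof -
    have "ck \<le> ck^2" using ck1 by (simp add: power2_eq_square)
    thus ?thesis using ck2 ck1 by linarith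
  qed
  define w :: "complex ^ 'n" where
    "w = (\<chi> i. if i = j then of_real cj * z $ i else if i = k then of_real ck * z $ i else z $ i)"
  have wj: "w $ j = of_real cj * z $ j" and wk: "w $ k = of_real ck * z $ k"
    and wr: "\<And>i. i \<in> UNIV - {j,k} \<Longrightarrow> w $ i = z $ i"
    unfolding w_def using jk by auto
  have p0: "p > 0" using q0 pq by simp
  have "(cmod (w$j))\<^sup>2 = cj^2 * p" unfolding p_def using wj cj0 by (simp add: norm_mult power_mult_distrib)
  also have "\<dots> = p - t" unfolding cj2 using p0 by (simp add: field_simps)
  finally have wj2: "(cmod (w$j))\<^sup>2 = p - t" .
  have "(cmod (w$k))\<^sup>2 = ck^2 * q" unfolding q_def using wk ck1 by (simp add: norm_mult power_mult_distrib)
  also have "\<dots> = q + t" unfolding ck2 using q0 by (simp add: field_simps)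
  finally have wk2: "(cmod (w$k))\<^sup>2 = q + t" .
  have "(\<Sum>i\<in>UNIV. (cmod (w $ i))\<^sup>2) = (cmod (w$j))\<^sup>2 + (cmod (w$k))\<^sup>2 + (\<Sum>i\<in>UNIV - {j,k}. (cmod (w $ i))\<^sup>2)"
    by (rule sum_two[OF jk])
  also have "(\<Sum>i\<in>UNIV - {j,k}. (cmod (w $ i))\<^sup>2) = (\<Sum>i\<in>UNIV - {j,k}. (cmod (z $ i))\<^sup>2)"
    by (rule sum.cong) (auto simp: wr)
  also have "(cmod (w$j))\<^sup>2 + (cmod (w$k))\<^sup>2 + (\<Sum>i\<in>UNIV - {j,k}. (cmod (z $ i))\<^sup>2)
      = (cmod (z$j))\<^sup>2 + (cmod (z$k))\<^sup>2 + (\<Sum>i\<in>UNIV - {j,k}. (cmod (z $ i))\<^sup>2)"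
    using wj2 wk2 unfolding p_def q_def by simp
  also have "\<dots> = (\<Sum>i\<in>UNIV. (cmod (z $ i))\<^sup>2)" by (rule sum_two[OF jk, symmetric])
  finally have wsph: "w \<in> csphere" using zs unfolding csphere_def by simp
  have "(\<Sum>i\<in>UNIV. (cmod (w $ i))^4) = (cmod (w$j))^4 + (cmod (w$k))^4 + (\<Sum>i\<in>UNIV - {j,k}. (cmod (w $ i))^4)"
    by (rule sum_two[OF jk])
  also have "(\<Sum>i\<in>UNIV - {j,k}. (cmod (w $ i))^4) = (\<Sum>i\<in>UNIV - {j,k}. (cmod (z $ i))^4)"
    by (rule sum.cong) (auto simp: wr)
  finally have W4: "(\<Sum>i\<in>UNIV. (cmod (w $ i))^4) = (p - t)^2 + (q + t)^2 + (\<Sum>i\<in>UNIV - {j,k}. (cmod (z $ i))^4)"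
    by (simp only: pow4[of "cmod (w$j)"] pow4[of "cmod (w$k)"] wj2 wk2)
  have Z4: "(\<Sum>i\<in>UNIV. (cmod (z $ i))^4) = p^2 + q^2 + (\<Sum>i\<in>UNIV - {j,k}. (cmod (z $ i))^4)"
    using sum_two[OF jk, of "\<lambda>i. (cmod (z $ i))^4"] unfolding p_def q_def
    by (simp only: pow4[of "cmod (z$j)"] pow4[of "cmod (z$k)"])
  have Qdiff: "(\<Sum>i\<in>UNIV. (cmod (w $ i))^4) - (\<Sum>i\<in>UNIV. (cmod (z $ i))^4) = 2*t^2 - 2*t*(p-q)"
    unfolding W4 Z4 by (simp add: power2_eq_square algebra_simps)
  have I1: "cinner_star a w = cnj (a$j) * w $ j + cnj (a$k) * w $ k + (\<Sum>i\<in>UNIV - {j,k}. cnj (a$i) * w$i)"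
    unfolding cinner_star_def by (rule sum_two[OF jk])
  have I2: "cinner_star a z = cnj (a$j) * z $ j + cnj (a$k) * z $ k + (\<Sum>i\<in>UNIV - {j,k}. cnj (a$i) * z$i)"
    unfolding cinner_star_def by (rule sum_two[OF jk])
  have I3: "(\<Sum>i\<in>UNIV - {j,k}. cnj (a$i) * w$i) = (\<Sum>i\<in>UNIV - {j,k}. cnj (a$i) * z$i)"
    by (rule sum.cong) (auto simp: wr)
  have "cinner_star a w = cinner_star a w - cinner_star a z" using az by simp
  also have "\<dots> = of_real (cj - 1) * (cnj (a$j) * z$j) + of_real (ck - 1) * (cnj (a$k) * z$k)"
    unfolding I1 I2 I3 wj wk by (simp add: algebra_simps)
  finally have aw: "cinner_star a w = of_real (cj - 1) * (cnj (a$j) * z$j) + of_real (ck - 1) * (cnj (a$k) * z$k)" .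
  have n1: "cmod (complex_of_real cj - 1) = \<bar>cj - 1\<bar>" "cmod (complex_of_real ck - 1) = \<bar>ck - 1\<bar>"
    by (metis norm_of_real of_real_1 of_real_diff)+
  have awb: "cmod (cinner_star a w) \<le> t * A"
  proof -
    have "cmod (cinner_star a w) \<le> \<bar>cj - 1\<bar> * (cmod (a$j) * cmod (z$j)) + \<bar>ck - 1\<bar> * (cmod (a$k) * cmod (z$k))"
      unfolding aw by (rule order_trans[OF norm_triangle_ineq]) (simp add: norm_mult n1)
    also have "\<dots> \<le> t/p * (cmod (a$j) * cmod (z$j)) + t/q * (cmod (a$k) * cmod (z$k))"
      using cjb ckb by (intro add_mono mult_right_mono) auto
    also have "\<dots> = t * A" unfolding A_def by (simp add: field_simps)
    finally show ?thesis .
  qed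
  have aw2: "(cmod (cinner_star a w))\<^sup>2 \<le> t^2 * A^2"
    using awb by (metis norm_ge_zero power_mono power_mult_distrib)
  have "f_obj a \<beta> w - f_obj a \<beta> z
      = (1/2) * (cmod (cinner_star a w))\<^sup>2 + (\<beta>/2) * ((\<Sum>i\<in>UNIV. (cmod (w $ i))^4) - (\<Sum>i\<in>UNIV. (cmod (z $ i))^4))"
    unfolding f_obj_def az by (simp add: algebra_simps)
  also have "\<dots> \<le> (1/2) * (t^2 * A^2) + (\<beta>/2) * (2*t^2 - 2*t*(p-q))"
    unfolding Qdiff using aw2 by simp
  also have "\<dots> = t * (t * K - \<beta> * (p - q))" unfolding K_def by (simp add: power2_eq_square algebra_simps)
  also have "\<dots> < 0" using t0 tK by (simp add: mult_pos_neg)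
  finally have fw: "f_obj a \<beta> w < f_obj a \<beta> z" by simp
  have "dist w z \<le> (\<Sum>i\<in>UNIV. norm ((w - z)$i))" unfolding dist_norm by (rule norm_le_l1_gen)
  also have "\<dots> = norm ((w - z)$j) + norm ((w - z)$k) + (\<Sum>i\<in>UNIV - {j,k}. norm ((w - z)$i))"
    by (rule sum_two[OF jk])
  also have "\<dots> = \<bar>cj - 1\<bar> * cmod (z$j) + \<bar>ck - 1\<bar> * cmod (z$k)"
  proof -
    have "(\<Sum>i\<in>UNIV - {j,k}. norm ((w - z)$i)) = 0" by (rule sum.neutral) (auto simp: wr)
    moreover have "(w - z)$j = of_real (cj - 1) * z$j" "(w - z)$k = of_real (ck - 1) * z$k"
      using wj wk by (simp_all add: algebra_simps)
    ultimately show ?thesis by (simp add: norm_mult n1)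
  qed
  also have "\<dots> \<le> t/p * cmod (z$j) + t/q * cmod (z$k)"
    using cjb ckb by (intro add_mono mult_right_mono) auto
  also have "\<dots> = t * D" unfolding D_def by (simp add: field_simps)
  also have "\<dots> < \<epsilon>" by (rule tD)
  finally show ?thesis using wsph fw by blast
qed

lemma no_better:
  assumes "local_min_on g S z"
    and "\<And>\<epsilon>. \<epsilon> > 0 \<Longrightarrow> \<exists>w\<in>S. dist w z < \<epsilon> \<and> g w < g z"
  shows False
proof -
  from assms(1) obtain e where "e > 0" "\<forall>w\<in>S. dist w z < e \<longrightarrow> g z \<le> g w"
    unfolding local_min_on_def by blast
  with assms(2)[OF \<open>e>0\<close>] show False by force
qed

theorem theorem8:
  fixes a z :: "complex ^ 'n" and \<beta> :: real
  assumes "\<beta> > 0"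
    and "local_min_on (f_obj a \<beta>) csphere z"
    and "cinner_star a z = 0"
  shows "card {k. z $ k = 0} \<le> 1
    \<and> (\<forall>j k. z $ j \<noteq> 0 \<longrightarrow> z $ k \<noteq> 0 \<longrightarrow> cmod (z $ j) = cmod (z $ k))"
proof
  have zs: "z \<in> csphere" using assms(2) unfolding local_min_on_def by blast
  show "card {k. z $ k = 0} \<le> 1"
  proof (rule ccontr)
    assume "\<not> card {k. z $ k = 0} \<le> 1"
    then obtain j k where "j \<noteq> k" "z $ j = 0" "z $ k = 0"
      using card_le_Suc0_iff_eq[of "{k. z $ k = 0}"] by auto
    then show False
      using no_better[OF assms(2)] zero_case[OF assms(1) zs assms(3)] by blast
  qed
  show "\<forall>j k. z $ j \<noteq> 0 \<longrightarrow> z $ k \<noteq> 0 \<longrightarrow> cmod (z $ j) = cmod (z $ k)"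
  proof (intro allI impI, rule ccontr)
    fix j k assume hj: "z $ j \<noteq> 0" and hk: "z $ k \<noteq> 0" and ne: "cmod (z $ j) \<noteq> cmod (z $ k)"
    show False
    proof (cases "cmod (z $ k) < cmod (z $ j)")
      case True
      then show False using no_better[OF assms(2)] mod_case[OF assms(1) zs assms(3) True hk] by blast
    next
      case False
      hence "cmod (z $ j) < cmod (z $ k)" using ne by linarith
      then show False using no_better[OF assms(2)] mod_case[OF assms(1) zs assms(3) _ hj] by blast
    qed
  qed
qed

end
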